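(* Let $m\ge1$ and $A=(a_0,\ldots,a_m)$ real with $a_0,a_m\ne0$. For every $x\in[-1,1]$ and every $\varepsilon>0$ there exists $n_0$ such that for every $n>n_0$ the polynomial $T_{n,A}$ has a root $\xi$ with $|x-\xi|<\varepsilon$.
   Context: $T_k$ denotes the Chebyshev polynomial of the first kind, $T_k(\cos\theta)=\cos k\theta$. For $A=(a_0,\ldots,a_m)$ real with $a_0,a_m\ne0$ and $n\ge m$, $T_{n,A}(x)=\sum_{i=0}^m a_iT_{n-i}(x)$. *)

theory Defs
  imports "HOL-Computational_Algebra.Polynomial"
begin

fun cheb_T :: "nat \<Rightarrow> real poly" where
  "cheb_T 0 = 1"
| "cheb_T (Suc 0) = [:0, 1:]"
| "cheb_T (Suc (Suc k)) = [:0, 2:] * cheb_T (Suc k) - cheb_T k"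

definition cheb_TA :: "nat \<Rightarrow> real list \<Rightarrow> real poly" where
  "cheb_TA n A = (\<Sum>i<length A. smult (A ! i) (cheb_T (n - i)))"

end

theory Submission
  imports Defs
begin

lemma cos_rec: "cos (a + t) = 2 * cos t * cos a - cos (a - t)" for a t :: real
  by (simp add: cos_add cos_diff algebra_simps)

lemma cheb_T_cos: "poly (cheb_T k) (cos t) = cos (real k * t)"
proof (induction k rule: cheb_T.induct)
  case 1 then show ?case by simp
next
  case 2 then show ?case by simp
next
  case (3 k)
  have e1: "cos (real (Suc (Suc k)) * t) = cos (real (Suc k) * t + t)"
    by (simp add: algebra_simps)
  have e2: "cos (real k * t) = cos (real (Suc k) * t - t)"
    by (simp add: algebra_simps)
  have key: "cos (real (Suc (Suc k)) * t) = 2 * cos t * cos (real (Suc k) * t) - cos (real k * t)"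
    unfolding e1 e2 using cos_rec by simp
  show ?case using 3 by (simp only: key cheb_T.simps poly_mult poly_diff) (simp add: algebra_simps)
qed

lemma TA_cos:
  assumes "length A = m + 1" "m \<le> n"
  shows "poly (cheb_TA n A) (cos t) =
     cos (real n * t) * (\<Sum>i\<le>m. A!i * cos (real i * t)) + sin (real n * t) * (\<Sum>i\<le>m. A!i * sin (real i * t))"
proof -
  have "poly (cheb_TA n A) (cos t) = (\<Sum>i\<le>m. A!i * cos (real (n - i) * t))"
    unfolding cheb_TA_def using assms(1) by (simp add: poly_sum cheb_T_cos lessThan_Suc_atMost)
  also have "\<dots> = (\<Sum>i\<le>m. cos (real n * t) * (A!i * cos (real i * t)) + sin (real n * t) * (A!i * sin (real i * t)))"
  proof (rule sum.cong)
    fix i assume "i \<in> {..m}"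
    then have eq: "real (n - i) * t = real n * t - real i * t" using assms(2)
      by (simp add: of_nat_diff left_diff_distrib)
    show "A!i * cos (real (n - i) * t) = cos (real n * t) * (A!i * cos (real i * t)) + sin (real n * t) * (A!i * sin (real i * t))"
      unfolding eq cos_diff by (simp add: algebra_simps)
  qed simp
  also have "\<dots> = cos (real n * t) * (\<Sum>i\<le>m. A!i * cos (real i * t)) + sin (real n * t) * (\<Sum>i\<le>m. A!i * sin (real i * t))"
    by (simp add: sum.distrib sum_distrib_left)
  finally show ?thesis .
qed

lemma cos_lip: "\<bar>cos (w::real) - cos z\<bar> \<le> \<bar>w - z\<bar>"
proof -
  have "\<bar>cos w - cos z\<bar> = 2 * \<bar>sin ((w + z) / 2)\<bar> * \<bar>sin ((z - w) / 2)\<bar>"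
    by (simp add: cos_diff_cos abs_mult)
  also have "\<dots> \<le> 2 * 1 * \<bar>(z - w) / 2\<bar>"
    by (intro mult_mono abs_sin_x_le_abs_x) auto
  finally show ?thesis by simp
qed

lemma exists_nonzero:
  fixes a b :: real and A :: "real list"
  assumes "a < b" "A ! 0 \<noteq> 0"
  shows "\<exists>t\<in>{a<..<b}. (\<Sum>i\<le>m. A!i * cos (real i * t)) \<noteq> 0 \<or> (\<Sum>i\<le>m. A!i * sin (real i * t)) \<noteq> 0"
proof (rule ccontr)
  assume H: "\<not> ?thesis"
  define b' where "b' = min b (a + 1)"
  have ab: "a < b'" using assms by (simp add: b'_def)
  define c where "c i = complex_of_real (A ! i)" for i
  have fin: "finite {z. (\<Sum>i\<le>m. c i * z^i) = 0}"
    by (subst polyfun_finite_roots) (use assms in \<open>auto simp: c_def intro!: exI[of _ 0]\<close>)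
  have sub: "cis ` {a<..<b'} \<subseteq> {z. (\<Sum>i\<le>m. c i * z^i) = 0}"
  proof
    fix z assume "z \<in> cis ` {a<..<b'}"
    then obtain t where t: "t \<in> {a<..<b'}" "z = cis t" by auto
    then have tt: "t \<in> {a<..<b}" by (auto simp: b'_def)
    have "(\<Sum>i\<le>m. c i * z^i) = complex_of_real (\<Sum>i\<le>m. A!i * cos (real i * t)) + \<i> * complex_of_real (\<Sum>i\<le>m. A!i * sin (real i * t))"
    proof -
      have "z^i = complex_of_real (cos (real i * t)) + \<i> * complex_of_real (sin (real i * t))" for i
        by (simp add: t DeMoivre complex_eq_iff)
      then show ?thesis by (simp add: c_def distrib_left sum.distrib sum_distrib_left mult_ac)
    qed
    moreover have "(\<Sum>i\<le>m. A!i * cos (real i * t)) = 0" "(\<Sum>i\<le>m. A!i * sin (real i * t)) = 0"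
      using H tt by auto
    ultimately show "z \<in> {z. (\<Sum>i\<le>m. c i * z^i) = 0}" by simp
  qed
  have "inj_on cis {a<..<b'}"
  proof (rule inj_onI)
    fix x y assume x: "x \<in> {a<..<b'}" and y: "y \<in> {a<..<b'}" and e: "cis x = cis y"
    then have "sin x = sin y \<and> cos x = cos y" by (metis cis.sel)
    then obtain k :: int where k: "x = y + 2 * pi * k" using sin_cos_eq_iff by blast
    have "\<bar>x - y\<bar> < 1" using x y by (auto simp: b'_def)
    then have "\<bar>2 * pi * k\<bar> < 1" using k by simp
    then have "2 * pi * \<bar>real_of_int k\<bar> < 1" by (simp add: abs_mult)
    moreover have "2 * pi * \<bar>real_of_int k\<bar> \<ge> 4" if "k \<noteq> 0"
    proof -
      have "\<bar>k\<bar> \<ge> 1" using that by linarith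
      then have "\<bar>real_of_int k\<bar> \<ge> 1" by linarith
      then have "2 * pi * \<bar>real_of_int k\<bar> \<ge> 4 * 1"
        using pi_ge_two by (intro mult_mono) auto
      then show ?thesis by simp
    qed
    ultimately have "k = 0" by fastforce
    then show "x = y" using k by simp
  qed
  then have "infinite (cis ` {a<..<b'})" using ab by (simp add: finite_image_iff)
  then show False using fin sub finite_subset by blast
qed

theorem theorem2p5:
  fixes A :: "real list" and m :: nat
  assumes "m \<ge> 1" and "length A = m + 1"
    and "A ! 0 \<noteq> 0" and "A ! m \<noteq> 0"
  shows "\<forall>x \<in> {-1..1}. \<forall>\<epsilon>>0. \<exists>n0. \<forall>n>n0. n \<ge> m \<longrightarrow>
           (\<exists>\<xi>::real. poly (cheb_TA n A) \<xi> = 0 \<and> \<bar>x - \<xi>\<bar> < \<epsilon>)"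
proof (intro ballI allI impI)
  fix x \<epsilon> :: real
  assume x: "x \<in> {-1..1}" and e: "\<epsilon> > 0"
  define C where "C t = (\<Sum>i\<le>m. A!i * cos (real i * t))" for t
  define S where "S t = (\<Sum>i\<le>m. A!i * sin (real i * t))" for t
  define \<theta>0 where "\<theta>0 = arccos x"
  have x0: "cos \<theta>0 = x" using x by (simp add: \<theta>0_def cos_arccos)
  obtain ts where ts: "ts \<in> {\<theta>0 - \<epsilon>/2<..<\<theta>0 + \<epsilon>/2}" and nz: "C ts \<noteq> 0 \<or> S ts \<noteq> 0"
    using exists_nonzero[of "\<theta>0 - \<epsilon>/2" "\<theta>0 + \<epsilon>/2" A m] e assms(3) unfolding C_def S_def by auto
  define R where "R = sqrt ((C ts)^2 + (S ts)^2)"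
  have pos: "(C ts)^2 + (S ts)^2 > 0" using nz
    by (metis add_nonneg_pos add_pos_nonneg zero_le_power2 zero_less_power2)
  then have R0: "R > 0" by (simp add: R_def)
  have "((C ts / R)^2 + (S ts / R)^2) = 1"
  proof -
    have R2: "R^2 = (C ts)^2 + (S ts)^2" using pos by (simp add: R_def)
    have "(C ts / R)^2 + (S ts / R)^2 = ((C ts)^2 + (S ts)^2) / R^2"
      by (simp add: power_divide add_divide_distrib)
    also have "\<dots> = 1" unfolding R2 by (rule divide_self) (use pos in linarith)
    finally show ?thesis .
  qed
  then obtain \<psi> where psi: "C ts / R = cos \<psi>" "S ts / R = sin \<psi>"
    using sincos_total_2pi by metis
  have Cp: "C ts = R * cos \<psi>" "S ts = R * sin \<psi>" using psi R0 by (auto simp: field_simps)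
  have contC: "isCont C ts" unfolding C_def by (intro continuous_intros)
  have contS: "isCont S ts" unfolding S_def by (intro continuous_intros)
  obtain d1 where d1: "d1 > 0" "\<And>t. \<bar>t - ts\<bar> < d1 \<Longrightarrow> \<bar>C t - C ts\<bar> < R/4"
  proof -
    obtain s where s: "s > 0" "\<And>t. t \<noteq> ts \<and> norm (t - ts) < s \<longrightarrow> norm (C t - C ts) < R/4"
      using LIM_D[OF contC[unfolded isCont_def], of "R/4"] R0 by auto
    have "\<bar>C t - C ts\<bar> < R/4" if "\<bar>t - ts\<bar> < s" for t
      using s(2)[of t] that R0 by (cases "t = ts") auto
    then show ?thesis using that s(1) by blast
  qed
  obtain d2 where d2: "d2 > 0" "\<And>t. \<bar>t - ts\<bar> < d2 \<Longrightarrow> \<bar>S t - S ts\<bar> < R/4"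
  proof -
    obtain s where s: "s > 0" "\<And>t. t \<noteq> ts \<and> norm (t - ts) < s \<longrightarrow> norm (S t - S ts) < R/4"
      using LIM_D[OF contS[unfolded isCont_def], of "R/4"] R0 by auto
    have "\<bar>S t - S ts\<bar> < R/4" if "\<bar>t - ts\<bar> < s" for t
      using s(2)[of t] that R0 by (cases "t = ts") auto
    then show ?thesis using that s(1) by blast
  qed
  define \<delta> where "\<delta> = min (min d1 d2) (\<epsilon>/2)"
  have dpos: "\<delta> > 0" using d1 d2 e by (simp add: \<delta>_def)
  show "\<exists>n0. \<forall>n>n0. n \<ge> m \<longrightarrow> (\<exists>\<xi>::real. poly (cheb_TA n A) \<xi> = 0 \<and> \<bar>x - \<xi>\<bar> < \<epsilon>)"
  proof (rule exI[of _ "nat \<lceil>2*pi/\<delta>\<rceil>"], intro allI impI)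
    fix n assume n: "n > nat \<lceil>2*pi/\<delta>\<rceil>" and nm: "m \<le> n"
    have "real n > 2*pi/\<delta>" using n by linarith
    moreover have "2*pi/\<delta> > 0" using dpos by simp
    ultimately have npos: "real n > 0" by linarith
    have "2*pi < real n * \<delta>" using \<open>real n > 2*pi/\<delta>\<close> dpos by (simp add: field_simps)
    then have nd: "2*pi/real n < \<delta>" using npos by (simp add: field_simps)
    define f where "f t = poly (cheb_TA n A) (cos t)" for t
    have fe: "f t = cos (real n * t) * C t + sin (real n * t) * S t" for t
      unfolding f_def C_def S_def using TA_cos[OF assms(2) nm] by simp
    define k where "k = \<lfloor>(real n * ts - \<psi>)/(2*pi)\<rfloor>"
    have k1: "real_of_int k \<le> (real n * ts - \<psi>)/(2*pi)" "(real n * ts - \<psi>)/(2*pi) < real_of_int k + 1"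
      unfolding k_def by linarith+
    have k2: "\<psi> + 2*pi*k \<le> real n * ts" "real n * ts - 2*pi < \<psi> + 2*pi*k"
      using k1 pi_gt_zero by (auto simp: field_simps)
    define tp where "tp = (\<psi> + 2*pi*k)/real n"
    define tm where "tm = (\<psi> + 2*pi*k + pi)/real n"
    have ntp: "real n * tp = \<psi> + 2*pi*k" using npos by (simp add: tp_def)
    have ntm: "real n * tm = \<psi> + 2*pi*k + pi" using npos by (simp add: tm_def)
    have nn: "real n * (ts - c/real n) = real n * ts - c" "real n * (ts + c/real n) = real n * ts + c" for c
      using npos by (simp_all add: algebra_simps)
    have tp1: "tp \<le> ts" "ts - 2*pi/real n < tp"
    proof -
      show "tp \<le> ts" using k2(1) ntp npos by (metis mult_le_cancel_left_pos)
      have "real n * (ts - 2*pi/real n) < real n * tp" unfolding nn ntp using k2(2) by simp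
      then show "ts - 2*pi/real n < tp" using npos by (metis mult_less_cancel_left_pos)
    qed
    have tm1: "tm \<le> ts + pi/real n" "ts - 2*pi/real n < tm"
    proof -
      have "real n * tm \<le> real n * (ts + pi/real n)" unfolding nn ntm using k2(1) by simp
      then show "tm \<le> ts + pi/real n" using npos by (metis mult_le_cancel_left_pos)
      have "real n * (ts - 2*pi/real n) < real n * tm" unfolding nn ntm using k2(2) pi_gt_zero by linarith
      then show "ts - 2*pi/real n < tm" using npos by (metis mult_less_cancel_left_pos)
    qed
    have "pi/real n \<le> 2*pi/real n" using npos pi_gt_zero by (simp add: divide_right_mono)
    then have dtp: "\<bar>tp - ts\<bar> < \<delta>" and dtm: "\<bar>tm - ts\<bar> < \<delta>" using tp1 tm1 nd by auto
    have c1: "cos (2*pi*real_of_int k) = 1" "sin (2*pi*real_of_int k) = 0"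
      using cos_int_2pin[of k] sin_int_2pin[of k] by simp_all
    have cp: "cos (real n * tp) = cos \<psi>" "sin (real n * tp) = sin \<psi>"
      unfolding ntp cos_add sin_add c1 by simp_all
    have cm: "cos (real n * tm) = - cos \<psi>" "sin (real n * tm) = - sin \<psi>"
      unfolding ntm cos_add sin_add c1 by simp_all
    have bC: "\<bar>C t - C ts\<bar> < R/4" "\<bar>S t - S ts\<bar> < R/4" if "\<bar>t - ts\<bar> < \<delta>" for t
      using d1(2) d2(2) that by (auto simp: \<delta>_def)
    have one: "cos \<psi> * C ts + sin \<psi> * S ts = R"
      unfolding Cp by (simp add: algebra_simps flip: power2_eq_square distrib_left)
    have lin: "\<bar>u * (C t - C ts) + v * (S t - S ts)\<bar> < R/2" if "\<bar>t - ts\<bar> < \<delta>" "\<bar>u\<bar> \<le> 1" "\<bar>v\<bar> \<le> 1" for t u v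
    proof -
      have "\<bar>u * (C t - C ts)\<bar> \<le> 1 * \<bar>C t - C ts\<bar>" unfolding abs_mult
        by (rule mult_right_mono) (use that in auto)
      moreover have "\<bar>v * (S t - S ts)\<bar> \<le> 1 * \<bar>S t - S ts\<bar>" unfolding abs_mult
        by (rule mult_right_mono) (use that in auto)
      ultimately show ?thesis using bC[OF that(1)] abs_triangle_ineq[of "u * (C t - C ts)" "v * (S t - S ts)"] by linarith
    qed
    have fp: "f tp > 0"
    proof -
      have "f tp = R + (cos \<psi> * (C tp - C ts) + sin \<psi> * (S tp - S ts))"
        unfolding fe cp using one by (simp add: algebra_simps)
      then show ?thesis using lin[OF dtp abs_cos_le_one[of \<psi>] abs_sin_le_one[of \<psi>]] R0 by (simp only: abs_less_iff) linarith
    qed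
    have fm: "f tm < 0"
    proof -
      have "f tm = - R - (cos \<psi> * (C tm - C ts) + sin \<psi> * (S tm - S ts))"
        unfolding fe cm using one by (simp add: algebra_simps)
      then show ?thesis using lin[OF dtm abs_cos_le_one[of \<psi>] abs_sin_le_one[of \<psi>]] R0 by (simp only: abs_less_iff) linarith
    qed
    have contf: "continuous_on {a..b} f" for a b
      unfolding f_def by (intro continuous_intros)
    obtain t where t: "f t = 0" "min tp tm \<le> t" "t \<le> max tp tm"
    proof (cases "tp \<le> tm")
      case True
      then obtain t where "tp \<le> t" "t \<le> tm" "f t = 0"
        using IVT2'[of f tm 0 tp, OF _ _ True contf] fp fm by auto
      then show ?thesis using that by auto
    next
      case False
      then obtain t where "tm \<le> t" "t \<le> tp" "f t = 0"
        using IVT'[of f tm 0 tp, OF _ _ _ contf] fp fm by auto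
      then show ?thesis using that by auto
    qed
    have "\<bar>t - ts\<bar> < \<delta>" using t dtp dtm by linarith
    moreover have "\<delta> \<le> \<epsilon>/2" by (simp add: \<delta>_def)
    ultimately have "\<bar>t - \<theta>0\<bar> < \<epsilon>" using ts by (simp add: abs_less_iff)
    then have "\<bar>x - cos t\<bar> < \<epsilon>" using cos_lip[of \<theta>0 t] x0 by linarith
    then show "\<exists>\<xi>::real. poly (cheb_TA n A) \<xi> = 0 \<and> \<bar>x - \<xi>\<bar> < \<epsilon>"
      using t(1) unfolding f_def by blast
  qed
qed

end
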